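(* Let $T\subseteq\mathbb{R}^n$ be an action set. If $T'$ is a face of $T$, then $T'$ is an action set.
   Context: Single-commodity network pricing setting: $G=(\mathcal{V},\mathcal{A})$ directed graph, arc costs $c\ge0$, nonempty tolled arc set $\mathcal{A}_1\subsetneq\mathcal{A}$, $n=|\mathcal{A}_1|$, $N$ node–arc incidence matrix, single origin $o$ and destination $d$ connected by a toll-free path, $b_o=1$, $b_d=-1$, $b_i=0$ otherwise, $\mathcal{X}=\{x\in\mathbb{R}^{\mathcal{A}}: Nx=b,\ x\ge0\}$, $x_{\mathcal{A}_1}$ the restriction of $x$ to $\mathcal{A}_1$. Let $f(t)=\min\{c^\top x+t^\top x_{\mathcal{A}_1}: x\in\mathcal{X}\}$ for $t\in\mathbb{R}^n$, $t\ge0$, and $f(t)=-\infty$ otherwise. A set $T\subseteq\mathbb{R}^n$ is an action set if there is a face $F$ of the polyhedron $\operatorname{epi}(-f)\subseteq\mathbb{R}^n\times\mathbb{R}$ such that (i) the direction $(0,1)$ does not belong to the linear subspace parallel to $\operatorname{aff}(F)$ ($F$ is non-vertical), and (ii) $T=\{t\in\mathbb{R}^n : (t,z)\in F\text{ for some } z\}$. *)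

theory Defs
  imports "HOL-Analysis.Analysis"
begin

(* Arcs are the elements of the finite type 't + 'u: Inl a are the tolled arcs (A_1),
   Inr u the toll-free arcs. Vertices: finite type 'v. tail/head give arc endpoints. *)

definition incid :: "('e::finite \<Rightarrow> 'v) \<Rightarrow> ('e \<Rightarrow> 'v) \<Rightarrow> ('e \<Rightarrow> real) \<Rightarrow> 'v \<Rightarrow> real" where
  "incid tail head x i = (\<Sum>e | tail e = i. x e) - (\<Sum>e | head e = i. x e)"

definition bvec :: "'v \<Rightarrow> 'v \<Rightarrow> 'v \<Rightarrow> real" where
  "bvec orig dest i = (if i = orig then 1 else if i = dest then -1 else 0)"

definition feasible_flows :: "('e::finite \<Rightarrow> 'v) \<Rightarrow> ('e \<Rightarrow> 'v) \<Rightarrow> 'v \<Rightarrow> 'v \<Rightarrow> ('e \<Rightarrow> real) set" where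
  "feasible_flows tail head orig dest =
     {x. (\<forall>i. incid tail head x i = bvec orig dest i) \<and> (\<forall>e. 0 \<le> x e)}"

definition toll_free_path :: "('t + 'u \<Rightarrow> 'v) \<Rightarrow> ('t + 'u \<Rightarrow> 'v) \<Rightarrow> 'v \<Rightarrow> 'v \<Rightarrow> bool" where
  "toll_free_path tail head orig dest =
     (\<exists>es. es \<noteq> [] \<and> (\<forall>e\<in>set es. \<exists>u. e = Inr u) \<and> tail (hd es) = orig \<and> head (last es) = dest
        \<and> (\<forall>k. k + 1 < length es \<longrightarrow> head (es ! k) = tail (es ! (k + 1))))"

definition fval :: "('t::finite + 'u::finite \<Rightarrow> 'v) \<Rightarrow> ('t + 'u \<Rightarrow> 'v) \<Rightarrow> ('t + 'u \<Rightarrow> real)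
     \<Rightarrow> 'v \<Rightarrow> 'v \<Rightarrow> real ^ 't \<Rightarrow> ereal" where
  "fval tail head c orig dest t =
     (if (\<forall>a. 0 \<le> t $ a)
      then ereal (Inf {(\<Sum>e\<in>UNIV. c e * x e) + (\<Sum>a\<in>UNIV. t $ a * x (Inl a)) | x. x \<in> feasible_flows tail head orig dest})
      else -\<infinity>)"

definition epi_neg_f :: "('t::finite + 'u::finite \<Rightarrow> 'v) \<Rightarrow> ('t + 'u \<Rightarrow> 'v) \<Rightarrow> ('t + 'u \<Rightarrow> real)
     \<Rightarrow> 'v \<Rightarrow> 'v \<Rightarrow> ((real ^ 't) \<times> real) set" where
  "epi_neg_f tail head c orig dest = {(t, z). - fval tail head c orig dest t \<le> ereal z}"

definition nonvertical :: "((real ^ 't) \<times> real) set \<Rightarrow> bool" where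
  "nonvertical F = ((0, 1) \<notin> {x - y | x y. x \<in> affine hull F \<and> y \<in> affine hull F})"

definition is_action_set :: "('t::finite + 'u::finite \<Rightarrow> 'v) \<Rightarrow> ('t + 'u \<Rightarrow> 'v) \<Rightarrow> ('t + 'u \<Rightarrow> real)
     \<Rightarrow> 'v \<Rightarrow> 'v \<Rightarrow> (real ^ 't) set \<Rightarrow> bool" where
  "is_action_set tail head c orig dest T =
     (\<exists>F. F face_of epi_neg_f tail head c orig dest \<and> nonvertical F \<and> T = fst ` F)"

end

theory Submission
  imports Defs
begin

lemma face_preimage_fst:
  fixes F :: "((real ^ 't) \<times> real) set"
  assumes F: "convex F" and T': "T' face_of fst ` F"
  shows "F \<inter> (T' \<times> UNIV) face_of F"
proof -
  have cT': "convex T'" using T' face_of_imp_convex by blast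
  show ?thesis
    unfolding face_of_def
  proof (intro conjI ballI impI)
    show "F \<inter> (T' \<times> UNIV) \<subseteq> F" by blast
    show "convex (F \<inter> (T' \<times> UNIV))"
      by (intro convex_Int F convex_Times cT' convex_UNIV)
  next
    fix a b x assume a: "a \<in> F" and b: "b \<in> F" and x: "x \<in> F \<inter> (T' \<times> UNIV)"
      and seg: "x \<in> open_segment a b"
    have "fst a \<in> T' \<and> fst b \<in> T'"
    proof (cases "fst a = fst b")
      case True
      from seg obtain u where u: "x = (1 - u) *\<^sub>R a + u *\<^sub>R b" by (auto simp: in_segment)
      have "fst x = (1 - u) *\<^sub>R fst a + u *\<^sub>R fst b" using u by simp
      also have "\<dots> = fst a" using True by (simp add: algebra_simps)
      finally have "fst x = fst a" .
      then show ?thesis using x True by auto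
    next
      case False
      from seg obtain u where u: "0 < u" "u < 1" "x = (1 - u) *\<^sub>R a + u *\<^sub>R b" by (auto simp: in_segment)
      have "fst x = (1 - u) *\<^sub>R fst a + u *\<^sub>R fst b" using u by simp
      then have "fst x \<in> open_segment (fst a) (fst b)" using u False by (auto simp: in_segment)
      moreover have "fst a \<in> fst ` F" "fst b \<in> fst ` F" using a b by auto
      moreover have "fst x \<in> T'" using x by (auto simp: mem_Times_iff)
      ultimately show ?thesis using T' unfolding face_of_def by blast
    qed
    then show "a \<in> F \<inter> (T' \<times> UNIV)" "b \<in> F \<inter> (T' \<times> UNIV)" using a b
      by (auto simp: mem_Times_iff)
  qed
qed

theorem lemma3:
  fixes tail head :: "'t::finite + 'u::finite \<Rightarrow> 'v::finite"
    and c :: "'t + 'u \<Rightarrow> real" and orig dest :: 'v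
    and T T' :: "(real ^ 't) set"
  assumes "inj (\<lambda>e. (tail e, head e))"
    and "\<forall>e. 0 \<le> c e"
    and "orig \<noteq> dest"
    and "toll_free_path tail head orig dest"
    and "is_action_set tail head c orig dest T"
    and "T' face_of T"
  shows "is_action_set tail head c orig dest T'"
proof -
  obtain F where F: "F face_of epi_neg_f tail head c orig dest" "nonvertical F" "T = fst ` F"
    using assms(5) unfolding is_action_set_def by blast
  define F' where "F' = F \<inter> (T' \<times> UNIV)"
  have "F' face_of F" unfolding F'_def
    using face_preimage_fst[of F T'] F assms(6) face_of_imp_convex by blast
  then have f1: "F' face_of epi_neg_f tail head c orig dest"
    using F(1) face_of_trans by blast
  have "affine hull F' \<subseteq> affine hull F" unfolding F'_def by (intro hull_mono) blast
  then have f2: "nonvertical F'" using F(2) unfolding nonvertical_def by blast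
  have "T' \<subseteq> T" using assms(6) face_of_imp_subset by blast
  then have f3: "T' = fst ` F'" unfolding F'_def using F(3) by force
  show ?thesis unfolding is_action_set_def using f1 f2 f3 by blast
qed

end
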